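(* Let $n\ge3$ and let $M^{2n-1}\subset U_n$ be the hypersurface consisting of non-degenerate $n$-gons with a fixed non-zero value of the area function $A$. Then at every point of $M$ the tangent space of $M$ is spanned by the vector fields tangent to the dual Birkhoff distribution $\mathcal F$ and their first commutators. Thus the bracket growth type of $\mathcal F$ on $M$ is $(n,2n-1)$.
   Context: $[\cdot,\cdot]$ is the determinant of two plane vectors; indices are cyclic. $G_n$ is the set of $n$-gons $(z_1,\dots,z_n)\in(\mathbb R^2)^n$ with $z_i\ne z_{i+1}$; $U_n\subset G_n$ is the open set of non-degenerate $n$-gons (no three consecutive vertices collinear). $A(z_1,\dots,z_n)=\sum_{i}[z_i,z_{i+1}]$ (twice the signed area). The dual Birkhoff distribution $\mathcal F$ on $G_n$: a tangent vector $W=(w_1,\dots,w_n)$ (velocities of the vertices) lies in $\mathcal F$ iff for each $i$ the induced motion of the line $z_iz_{i+1}$ is an infinitesimal rotation about the midpoint of $z_iz_{i+1}$; equivalently $[w_i+w_{i+1},z_{i+1}-z_i]=0$ for all $i$. $\mathcal F$ is $n$-dimensional and tangent to the level sets of $A$, hence defines a distribution on $M$. *)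

theory Defs
  imports "HOL-Analysis.Analysis"
begin

definition det2 :: "real^2 \<Rightarrow> real^2 \<Rightarrow> real" where
  "det2 u v = u$1 * v$2 - u$2 * v$1"

text \<open>The vertices of an n-gon are indexed by a finite type 'n with CARD('n) = n;
  cyclic order of indices is given by a cyclic successor permutation s (i+1 = s i).\<close>
definition cyclic_succ :: "('n::finite \<Rightarrow> 'n) \<Rightarrow> bool" where
  "cyclic_succ s \<longleftrightarrow> bij s \<and> (\<forall>i j. \<exists>k. (s ^^ k) i = j)"

text \<open>Twice the signed area A.\<close>
definition area :: "('n::finite \<Rightarrow> 'n) \<Rightarrow> real^2^'n \<Rightarrow> real" where
  "area s z = (\<Sum>i\<in>UNIV. det2 (z$i) (z$(s i)))"

definition polygon :: "('n::finite \<Rightarrow> 'n) \<Rightarrow> real^2^'n \<Rightarrow> bool" where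
  "polygon s z \<longleftrightarrow> (\<forall>i. z$i \<noteq> z$(s i))"

definition nondegenerate :: "('n::finite \<Rightarrow> 'n) \<Rightarrow> real^2^'n \<Rightarrow> bool" where
  "nondegenerate s z \<longleftrightarrow> polygon s z \<and>
     (\<forall>i. det2 (z$(s i) - z$i) (z$(s (s i)) - z$(s i)) \<noteq> 0)"

definition Mset :: "('n::finite \<Rightarrow> 'n) \<Rightarrow> real \<Rightarrow> (real^2^'n) set" where
  "Mset s c = {z. nondegenerate s z \<and> area s z = c}"

definition dual_birkhoff :: "('n::finite \<Rightarrow> 'n) \<Rightarrow> real^2^'n \<Rightarrow> (real^2^'n) set" where
  "dual_birkhoff s z = {W. \<forall>i. det2 (W$i + W$(s i)) (z$(s i) - z$i) = 0}"

definition tangent_M :: "('n::finite \<Rightarrow> 'n) \<Rightarrow> real^2^'n \<Rightarrow> (real^2^'n) set" where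
  "tangent_M s P = {W. frechet_derivative (area s) (at P) W = 0}"

text \<open>C^k maps on a set (intended for open S): partial derivatives in every
  direction are C^(k-1).\<close>
fun Ck_on :: "nat \<Rightarrow> 'a::euclidean_space set \<Rightarrow> ('a \<Rightarrow> 'b::euclidean_space) \<Rightarrow> bool" where
  "Ck_on 0 S f = continuous_on S f"
| "Ck_on (Suc k) S f = ((\<forall>x\<in>S. f differentiable (at x)) \<and>
      (\<forall>v. Ck_on k S (\<lambda>x. frechet_derivative f (at x) v)))"

definition smooth_on :: "'a::euclidean_space set \<Rightarrow> ('a \<Rightarrow> 'b::euclidean_space) \<Rightarrow> bool" where
  "smooth_on S f \<longleftrightarrow> (\<forall>k. Ck_on k S f)"

definition F_field :: "('n::finite \<Rightarrow> 'n) \<Rightarrow> (real^2^'n) set \<Rightarrow> (real^2^'n \<Rightarrow> real^2^'n) \<Rightarrow> bool" where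
  "F_field s S X \<longleftrightarrow> smooth_on S X \<and> (\<forall>z\<in>S. X z \<in> dual_birkhoff s z)"

definition lie_bracket :: "('a::euclidean_space \<Rightarrow> 'a) \<Rightarrow> ('a \<Rightarrow> 'a) \<Rightarrow> 'a \<Rightarrow> 'a" where
  "lie_bracket X Y z = frechet_derivative Y (at z) (X z) - frechet_derivative X (at z) (Y z)"

end

theory Submission
  imports Defs
begin


lemma has_derivative_vec_lambda_at:
  fixes f :: "'x::real_normed_vector \<Rightarrow> 'a::euclidean_space ^ 'n"
  assumes "\<And>i. ((\<lambda>x. f x $ i) has_derivative (\<lambda>h. f' h $ i)) (at a)"
  shows "(f has_derivative f') (at a)"
proof -
  have "((\<lambda>x. f x \<bullet> k) has_derivative (\<lambda>x. f' x \<bullet> k)) (at a)" if kB: "k \<in> Basis" for k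
  proof -
    have "\<exists>i u. k = axis i u \<and> u \<in> Basis" using kB unfolding Basis_vec_def by auto
    then obtain i u where k: "k = axis i u" and u: "u \<in> Basis" by blast
    have "((\<lambda>x. f x $ i \<bullet> u) has_derivative (\<lambda>h. f' h $ i \<bullet> u)) (at a)"
      using has_derivative_inner_left[OF assms[of i]] .
    then show ?thesis by (simp add: k inner_axis)
  qed
  then show ?thesis using has_derivative_componentwise_within[of f f' a UNIV] by auto
qed

inductive polyf :: "(real^2^'n::finite \<Rightarrow> real) \<Rightarrow> bool" where
  pconst: "polyf (\<lambda>z. c)"
| pcoord: "polyf (\<lambda>z. z$i$b)"
| padd: "polyf f \<Longrightarrow> polyf g \<Longrightarrow> polyf (\<lambda>z. f z + g z)"
| pmult: "polyf f \<Longrightarrow> polyf g \<Longrightarrow> polyf (\<lambda>z. f z * g z)"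

lemma polyf_diff: "polyf f \<Longrightarrow> polyf g \<Longrightarrow> polyf (\<lambda>z. f z - g z)"
proof -
  assume "polyf f" "polyf g"
  then have "polyf (\<lambda>z. f z + (-1) * g z)" by (intro padd pmult pconst)
  then show ?thesis by simp
qed

lemma polyf_deriv:
  fixes f :: "real^2^'n::finite \<Rightarrow> real"
  shows "polyf f \<Longrightarrow> \<exists>f'. (\<forall>x. (f has_derivative f' x) (at x)) \<and> (\<forall>v. polyf (\<lambda>x. f' x v))"
proof (induction rule: polyf.induct)
  case (pconst c)
  then show ?case by (intro exI[of _ "\<lambda>x v. 0"]) (auto intro: polyf.intros)
next
  case (pcoord i b)
  have "((\<lambda>z::real^2^'n. z$i$b) has_derivative (\<lambda>v. v$i$b)) (at x)" for x
    by (intro bounded_linear_imp_has_derivative bounded_linear_compose[OF bounded_linear_vec_nth bounded_linear_vec_nth])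
  then show ?case by (intro exI[of _ "\<lambda>x v. v$i$b"]) (auto intro: polyf.intros)
next
  case (padd f g)
  then obtain f' g' where "\<forall>x. (f has_derivative f' x) (at x)" "\<forall>v. polyf (\<lambda>x. f' x v)"
     "\<forall>x. (g has_derivative g' x) (at x)" "\<forall>v. polyf (\<lambda>x. g' x v)" by blast
  then show ?case
    by (intro exI[of _ "\<lambda>x v. f' x v + g' x v"]) (auto intro: polyf.intros has_derivative_add)
next
  case (pmult f g)
  then obtain f' g' where "\<forall>x. (f has_derivative f' x) (at x)" "\<forall>v. polyf (\<lambda>x. f' x v)"
     "\<forall>x. (g has_derivative g' x) (at x)" "\<forall>v. polyf (\<lambda>x. g' x v)" by blast
  then show ?case
  proof (intro exI[of _ "\<lambda>x v. f x * g' x v + f' x v * g x"] conjI allI)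
    fix x show "((\<lambda>z. f z * g z) has_derivative (\<lambda>v. f x * g' x v + f' x v * g x)) (at x)"
      using \<open>\<forall>x. (f has_derivative f' x) (at x)\<close> \<open>\<forall>x. (g has_derivative g' x) (at x)\<close>
      by (auto intro: has_derivative_mult)
  next
    fix v
    have a: "polyf (\<lambda>x. f' x v)" "polyf (\<lambda>x. g' x v)" using \<open>\<forall>v. polyf (\<lambda>x. f' x v)\<close> \<open>\<forall>v. polyf (\<lambda>x. g' x v)\<close> by auto
    show "polyf (\<lambda>x. f x * g' x v + f' x v * g x)"
      by (rule polyf.padd, rule polyf.pmult[OF pmult.hyps(1) a(2)], rule polyf.pmult[OF a(1) pmult.hyps(2)])
  qed
qed

definition polyv :: "(real^2^'n::finite \<Rightarrow> real^2^'n) \<Rightarrow> bool" where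
  "polyv F \<longleftrightarrow> (\<forall>i b. polyf (\<lambda>z. F z $ i $ b))"

lemma polyv_deriv:
  assumes "polyv F"
  shows "(\<forall>x. F differentiable (at x)) \<and> (\<forall>v. polyv (\<lambda>x. frechet_derivative F (at x) v))"
proof -
  have "\<forall>i b. \<exists>f'. (\<forall>x. ((\<lambda>z. F z $ i $ b) has_derivative f' x) (at x)) \<and> (\<forall>v. polyf (\<lambda>x. f' x v))"
    using assms polyf_deriv unfolding polyv_def by blast
  then obtain d where d: "\<And>i b x. ((\<lambda>z. F z $ i $ b) has_derivative d i b x) (at x)"
    "\<And>i b v. polyf (\<lambda>x. d i b x v)" by metis
  define F' where "F' x v = (\<chi> i. \<chi> b. d i b x v)" for x v
  have FD: "(F has_derivative F' x) (at x)" for x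
    by (rule has_derivative_vec_lambda_at, rule has_derivative_vec_lambda_at) (simp add: F'_def d)
  then have "frechet_derivative F (at x) = F' x" for x
    by (metis frechet_derivative_at)
  then show ?thesis using FD d(2) unfolding polyv_def differentiable_def F'_def by auto
qed

lemma polyv_Ck: "polyv F \<Longrightarrow> Ck_on k S F"
proof (induction k arbitrary: F)
  case 0
  then have "\<forall>x. F differentiable (at x)" using polyv_deriv by blast
  then show ?case by (simp add: differentiable_imp_continuous_on differentiable_at_imp_differentiable_on)
next
  case (Suc k)
  then show ?case using polyv_deriv by auto
qed

lemma polyv_smooth: "polyv F \<Longrightarrow> smooth_on S F"
  unfolding smooth_on_def using polyv_Ck by blast



section \<open>Cyclic successor facts\<close>

lemma cs_bij: "cyclic_succ s \<Longrightarrow> bij s" by (simp add: cyclic_succ_def)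

lemma cs_reach: "cyclic_succ s \<Longrightarrow> \<exists>k. (s ^^ k) i = j" by (simp add: cyclic_succ_def)

lemma cs_ne1:
  fixes s :: "'n::finite \<Rightarrow> 'n"
  assumes "cyclic_succ s" "CARD('n) \<ge> 3" shows "s j \<noteq> j"
proof
  assume h: "s j = j"
  have r: "(s ^^ k) j = j" for k by (induction k) (auto simp: h)
  have "x \<in> {j}" for x
  proof -
    obtain k where "(s ^^ k) j = x" using cs_reach[OF assms(1)] by blast
    then show ?thesis using r by auto
  qed
  then have "UNIV \<subseteq> {j}" by blast
  then have "CARD('n) \<le> card {j}" by (intro card_mono) auto
  with assms(2) show False by simp
qed

lemma cs_ne2:
  fixes s :: "'n::finite \<Rightarrow> 'n"
  assumes "cyclic_succ s" "CARD('n) \<ge> 3" shows "s (s j) \<noteq> j"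
proof
  assume h: "s (s j) = j"
  have r: "(s ^^ k) j \<in> {j, s j}" for k by (induction k) (auto simp: h)
  have "x \<in> {j, s j}" for x
  proof -
    obtain k where "(s ^^ k) j = x" using cs_reach[OF assms(1)] by blast
    then show ?thesis using r by auto
  qed
  then have "UNIV \<subseteq> {j, s j}" by blast
  then have "CARD('n) \<le> card {j, s j}" by (intro card_mono) auto
  also have "\<dots> \<le> 2" by (simp add: card_insert_le_m1)
  finally show False using assms(2) by simp
qed

lemma cs_inv1: "cyclic_succ s \<Longrightarrow> s (inv s j) = j"
  using cs_bij bij_inv_eq_iff by metis
lemma cs_inv2: "cyclic_succ s \<Longrightarrow> inv s (s j) = j"
  using cs_bij bij_inv_eq_iff by metis

lemma cs_reindex:
  fixes s :: "'n::finite \<Rightarrow> 'n"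
  assumes "cyclic_succ s" shows "(\<Sum>k\<in>UNIV. f (s k)) = (\<Sum>k\<in>UNIV. f k)"
  using sum.reindex_bij_betw[of s UNIV UNIV f] cs_bij[OF assms] by (simp add: bij_def bij_betw_def)

section \<open>Derivative of the area\<close>

definition dA :: "('n::finite \<Rightarrow> 'n) \<Rightarrow> real^2^'n \<Rightarrow> real^2^'n \<Rightarrow> real" where
  "dA s P W = (\<Sum>i\<in>UNIV. det2 (W$i) (P$(s i)) + det2 (P$i) (W$(s i)))"

lemma has_derivative_nth2 [derivative_intros]:
  "((\<lambda>z::real^2^'n. z$i$b) has_derivative (\<lambda>v. v$i$b)) F"
  by (intro bounded_linear_imp_has_derivative bounded_linear_compose[OF bounded_linear_vec_nth bounded_linear_vec_nth])

lemma area_deriv: "(area s has_derivative dA s P) (at P)"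
  unfolding area_def[abs_def] dA_def[abs_def] det2_def
  by (auto intro!: derivative_eq_intros simp: algebra_simps)

lemma area_fd: "frechet_derivative (area s) (at P) = dA s P"
  using area_deriv frechet_derivative_at by metis

lemma dA_linear: "linear (dA s P)"
  using area_deriv has_derivative_linear by blast

lemma dA_phi:
  fixes s :: "'n::finite \<Rightarrow> 'n"
  assumes "cyclic_succ s"
  shows "(\<Sum>k\<in>UNIV. det2 (W$k + W$(s k)) (P$(s k) - P$k)) = dA s P W"
proof -
  let ?g = "\<lambda>k. det2 (W$k) (P$k)"
  have "det2 (W$k + W$(s k)) (P$(s k) - P$k)
     = (det2 (W$k) (P$(s k)) + det2 (P$k) (W$(s k))) + (?g (s k) - ?g k)" for k
    by (simp add: det2_def algebra_simps)
  then have "(\<Sum>k\<in>UNIV. det2 (W$k + W$(s k)) (P$(s k) - P$k))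
     = dA s P W + ((\<Sum>k\<in>UNIV. ?g (s k)) - (\<Sum>k\<in>UNIV. ?g k))"
    by (simp add: dA_def sum.distrib sum_subtractf)
  then show ?thesis using cs_reindex[OF assms, of ?g] by simp
qed

lemma dA_self: "dA s P P = 2 * area s P"
  by (simp add: dA_def area_def sum_distrib_left det2_def algebra_simps sum.distrib)

section \<open>The key bracket identity\<close>

lemma Ffield_diff:
  assumes "F_field s S Y" "x \<in> S"
  shows "Y differentiable (at x)"
proof -
  have "Ck_on (Suc 0) S Y" using assms(1) unfolding F_field_def smooth_on_def by blast
  then show ?thesis using assms(2) by simp
qed

lemma deriv_constraint:
  assumes "open S" "P \<in> S" "F_field s S Y"
  shows "det2 (frechet_derivative Y (at P) v $ k + frechet_derivative Y (at P) v $ s k) (P$(s k) - P$k)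
       + det2 (Y P $ k + Y P $ s k) (v$(s k) - v$k) = 0"
proof -
  let ?D = "frechet_derivative Y (at P)"
  have YD: "(Y has_derivative ?D) (at P)"
    using Ffield_diff[OF assms(3,2)] frechet_derivative_works by blast
  have c: "((\<lambda>z. Y z $ i $ b) has_derivative (\<lambda>v. ?D v $ i $ b)) (at P)" for i b
    using bounded_linear.has_derivative[OF bounded_linear_compose[OF bounded_linear_vec_nth bounded_linear_vec_nth] YD] .
  define g where "g z = det2 (Y z $ k + Y z $ s k) (z$(s k) - z$k)" for z
  define g' where "g' v = det2 (?D v $ k + ?D v $ s k) (P$(s k) - P$k)
       + det2 (Y P $ k + Y P $ s k) (v$(s k) - v$k)" for v
  have "(g has_derivative g') (at P)"
    unfolding g_def[abs_def] g'_def[abs_def] det2_def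
    by (auto intro!: derivative_eq_intros c simp: algebra_simps)
  moreover have "(g has_derivative (\<lambda>v. 0)) (at P)"
  proof (rule has_derivative_transform_within_open[OF _ assms(1,2)])
    show "((\<lambda>z. 0) has_derivative (\<lambda>v. 0)) (at P)" by simp
    fix z assume "z \<in> S"
    then show "0 = g z" using assms(3) unfolding F_field_def dual_birkhoff_def g_def by auto
  qed
  ultimately have "g' = (\<lambda>v. 0)" using has_derivative_unique by blast
  then show ?thesis unfolding g'_def by meson
qed

lemma bracket_phi:
  assumes "open S" "P \<in> S" "F_field s S X" "F_field s S Y"
  defines "B \<equiv> lie_bracket X Y P"
  shows "det2 (B$k + B$(s k)) (P$(s k) - P$k)
       = 2 * (det2 (X P $ s k) (Y P $ s k) - det2 (X P $ k) (Y P $ k))"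
proof -
  have 1: "det2 (frechet_derivative Y (at P) (X P) $ k + frechet_derivative Y (at P) (X P) $ s k) (P$(s k) - P$k)
       + det2 (Y P $ k + Y P $ s k) (X P$(s k) - X P$k) = 0"
    by (rule deriv_constraint[OF assms(1,2,4)])
  have 2: "det2 (frechet_derivative X (at P) (Y P) $ k + frechet_derivative X (at P) (Y P) $ s k) (P$(s k) - P$k)
       + det2 (X P $ k + X P $ s k) (Y P$(s k) - Y P$k) = 0"
    by (rule deriv_constraint[OF assms(1,2,3)])
  show ?thesis using 1 2 unfolding B_def lie_bracket_def det2_def
    by (simp add: algebra_simps)
qed



definition ed :: "('n::finite \<Rightarrow> 'n) \<Rightarrow> real^2^'n \<Rightarrow> 'n \<Rightarrow> real^2" where
  "ed s P i = P$(s i) - P$i"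
definition Dd :: "('n::finite \<Rightarrow> 'n) \<Rightarrow> real^2^'n \<Rightarrow> 'n \<Rightarrow> real" where
  "Dd s P k = det2 (ed s P (inv s k)) (ed s P k)"

definition Vf :: "('n::finite \<Rightarrow> 'n) \<Rightarrow> 'n \<Rightarrow> real^2^'n \<Rightarrow> real^2^'n" where
  "Vf s j z = (\<chi> k. if k = j then det2 (z$(s j) - z$j) (z$(s (s j)) - z$(s j)) *\<^sub>R (z$j - z$(inv s j))
     else if k = s j then det2 (z$j - z$(inv s j)) (z$(s j) - z$j) *\<^sub>R (z$(s (s j)) - z$(s j)) else 0)"

lemma polyf_det2: "polyf (\<lambda>z. det2 (z$a - z$b) (z$c - z$d))"
  unfolding det2_def by (simp; intro polyf_diff polyf.pmult polyf.pcoord)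

lemma polyf_cdiff: "polyf (\<lambda>z. z$a$b - z$c$b)"
  by (intro polyf_diff polyf.pcoord)

lemma polyf_if: "polyf f \<Longrightarrow> polyf g \<Longrightarrow> polyf (\<lambda>z. if P then f z else g z)"
  by (cases P) auto

lemma Vf_polyv: "polyv (Vf s j)"
  unfolding polyv_def
proof (intro allI)
  fix i b
  have e: "(\<lambda>z. Vf s j z $ i $ b) = (\<lambda>z. if i = j then det2 (z$(s j) - z$j) (z$(s (s j)) - z$(s j)) * (z$j$b - z$(inv s j)$b)
     else if i = s j then det2 (z$j - z$(inv s j)) (z$(s j) - z$j) * (z$(s (s j))$b - z$(s j)$b) else 0)"
    by (auto simp: Vf_def fun_eq_iff)
  show "polyf (\<lambda>z. Vf s j z $ i $ b)"
    unfolding e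
    by (intro polyf_if polyf.pmult[OF polyf_det2 polyf_cdiff] polyf.pconst)
qed

lemma det2_cancel: "det2 (det2 b c *\<^sub>R a + det2 a b *\<^sub>R c) b = 0"
  by (simp add: det2_def algebra_simps)
lemma det2_self: "det2 (t *\<^sub>R u) u = 0"
  by (simp add: det2_def algebra_simps)

lemma Vf_F:
  fixes s :: "'n::finite \<Rightarrow> 'n"
  assumes cs: "cyclic_succ s" and n3: "CARD('n) \<ge> 3"
  shows "Vf s j z \<in> dual_birkhoff s z"
  unfolding dual_birkhoff_def
proof (intro CollectI allI)
  fix k
  have n1: "s j \<noteq> j" and n2: "s (s j) \<noteq> j" using cs_ne1[OF cs n3] cs_ne2[OF cs n3] by auto
  have n3': "s (s j) \<noteq> s j" using n1 cs_bij[OF cs] by (metis bij_pointE)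
  have p1: "s (inv s j) = j" using cs_inv1[OF cs] .
  show "det2 (Vf s j z $ k + Vf s j z $ s k) (z $ s k - z $ k) = 0"
  proof (cases "k = j")
    case True
    then show ?thesis using n1 det2_cancel[of "z$(s j) - z$j" "z$(s (s j)) - z$(s j)" "z$j - z$(inv s j)"]
      by (simp add: Vf_def add.commute)
  next
    case f1: False
    show ?thesis
    proof (cases "k = s j")
      case True
      then show ?thesis using n1 n2 n3' by (simp add: Vf_def det2_self)
    next
      case f2: False
      show ?thesis
      proof (cases "s k = j")
        case True
        then have "k = inv s j" using cs_inv2[OF cs] by metis
        then show ?thesis using True f1 f2 by (simp add: Vf_def det2_self)
      next
        case False
        have "s k \<noteq> s j" using f1 cs_bij[OF cs] by (metis bij_pointE)
        then show ?thesis using False f1 f2 by (simp add: Vf_def det2_def)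
      qed
    qed
  qed
qed

lemma Vf_Ffield:
  fixes s :: "'n::finite \<Rightarrow> 'n"
  assumes cs: "cyclic_succ s" and n3: "CARD('n) \<ge> 3"
  shows "F_field s UNIV (Vf s j)"
  unfolding F_field_def using polyv_smooth[OF Vf_polyv] Vf_F[OF assms] by blast

lemma Vf_at:
  fixes s :: "'n::finite \<Rightarrow> 'n"
  assumes cs: "cyclic_succ s"
  shows "Vf s j P $ k = (if k = j then Dd s P (s j) *\<^sub>R ed s P (inv s j)
     else if k = s j then Dd s P j *\<^sub>R ed s P (s j) else 0)"
  using cs_inv1[OF cs, of j] cs_inv2[OF cs, of j] by (simp add: Vf_def Dd_def ed_def)

lemma Vf_comb:
  fixes s :: "'n::finite \<Rightarrow> 'n"
  assumes cs: "cyclic_succ s" and n3: "CARD('n) \<ge> 3"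
  shows "(\<Sum>j\<in>UNIV. c j *\<^sub>R Vf s j P) $ k
     = (c k * Dd s P (s k)) *\<^sub>R ed s P (inv s k) + (c (inv s k) * Dd s P (inv s k)) *\<^sub>R ed s P k"
proof -
  have nk: "inv s k \<noteq> k" using cs_ne1[OF cs n3, of k] cs_inv1[OF cs, of k] by metis
  have t: "c j *\<^sub>R (Vf s j P $ k) = (if j = k then (c k * Dd s P (s k)) *\<^sub>R ed s P (inv s k) else 0)
      + (if j = inv s k then (c (inv s k) * Dd s P (inv s k)) *\<^sub>R ed s P k else 0)" for j
  proof (cases "j = k")
    case True
    then show ?thesis using nk by (simp add: Vf_at[OF cs])
  next
    case False
    show ?thesis
    proof (cases "j = inv s k")
      case True
      then have "s j = k" using cs_inv1[OF cs] by metis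
      then show ?thesis using True False by (simp add: Vf_at[OF cs])
    next
      case f2: False
      then have "s j \<noteq> k" using cs_inv2[OF cs] by metis
      then show ?thesis using False f2 by (simp add: Vf_at[OF cs])
    qed
  qed
  show ?thesis by (simp add: t sum.distrib)
qed

lemma nondeg_Dd:
  fixes s :: "'n::finite \<Rightarrow> 'n"
  assumes cs: "cyclic_succ s" and nd: "nondegenerate s P"
  shows "Dd s P k \<noteq> 0"
proof -
  have "det2 (P$(s (inv s k)) - P$(inv s k)) (P$(s (s (inv s k))) - P$(s (inv s k))) \<noteq> 0"
    using nd unfolding nondegenerate_def by blast
  then show ?thesis using cs_inv1[OF cs, of k] by (simp add: Dd_def ed_def)
qed

lemma cramer2: "det2 a b *\<^sub>R w = det2 w b *\<^sub>R a + det2 a w *\<^sub>R b"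
  unfolding vec_eq_iff forall_2 det2_def by (simp add: algebra_simps)

lemma decomp2:
  assumes "det2 a b \<noteq> 0" "det2 b c \<noteq> 0" "det2 a' a \<noteq> 0" "det2 (w' + w) a = 0"
  shows "(det2 w b / (det2 a b * det2 b c) * det2 b c) *\<^sub>R a
       + (det2 w' a / (det2 a' a * det2 a b) * det2 a' a) *\<^sub>R b = w"
proof -
  have 1: "det2 w' a = det2 a w" using assms(4) by (simp add: det2_def algebra_simps)
  have c1: "(det2 w b / (det2 a b * det2 b c) * det2 b c) = det2 w b / det2 a b"
    using assms(1-3) by (auto simp: field_simps)
  have c2: "(det2 w' a / (det2 a' a * det2 a b) * det2 a' a) = det2 a w / det2 a b"
    using assms(1-3) 1 by (auto simp: field_simps)
  then have "(det2 w b / (det2 a b * det2 b c) * det2 b c) *\<^sub>R a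
       + (det2 w' a / (det2 a' a * det2 a b) * det2 a' a) *\<^sub>R b
       = (1 / det2 a b) *\<^sub>R (det2 w b *\<^sub>R a + det2 a w *\<^sub>R b)"
    unfolding c1 c2 by (simp add: scaleR_add_right)
  also have "\<dots> = w" unfolding cramer2[symmetric] using assms(1) by simp
  finally show ?thesis .
qed

lemma indep2:
  assumes "det2 a b \<noteq> 0" "x *\<^sub>R a + y *\<^sub>R b = 0"
  shows "x = 0"
proof -
  have "det2 (x *\<^sub>R a + y *\<^sub>R b) b = x * det2 a b" by (simp add: det2_def algebra_simps)
  moreover have "det2 0 b = 0" by (simp add: det2_def)
  ultimately show ?thesis using assms by simp
qed



definition phi :: "('n::finite \<Rightarrow> 'n) \<Rightarrow> real^2^'n \<Rightarrow> real^2^'n \<Rightarrow> 'n \<Rightarrow> real" where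
  "phi s P W k = det2 (W$k + W$(s k)) (P$(s k) - P$k)"

lemma phi_linear: "linear (\<lambda>W. phi s P W k)"
  by (rule linearI) (simp_all add: phi_def det2_def algebra_simps)

lemma phi_add: "phi s P (W + W') k = phi s P W k + phi s P W' k"
  using linear_add[OF phi_linear] by blast
lemma phi_diff: "phi s P (W - W') k = phi s P W k - phi s P W' k"
  using linear_diff[OF phi_linear] by blast
lemma phi_scale: "phi s P (c *\<^sub>R W) k = c * phi s P W k"
  using linear_scale[OF phi_linear] by (metis real_scaleR_def)
lemma phi_zero: "phi s P 0 k = 0"
  using linear_0[OF phi_linear] by blast
lemma phi_sum: "phi s P (\<Sum>i\<in>A. f i) k = (\<Sum>i\<in>A. phi s P (f i) k)"
  using linear_sum[OF phi_linear] by blast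

lemma db_phi: "W \<in> dual_birkhoff s P \<longleftrightarrow> (\<forall>k. phi s P W k = 0)"
  by (simp add: dual_birkhoff_def phi_def)

lemma det2_scales: "det2 (x *\<^sub>R u) (y *\<^sub>R v) = x * y * det2 u v"
  by (simp add: det2_def algebra_simps)
lemma det2_swap: "det2 v u = - det2 u v"
  by (simp add: det2_def algebra_simps)

context
  fixes s :: "'n::finite \<Rightarrow> 'n" and P :: "real^2^'n"
  assumes cs: "cyclic_succ s" and n3: "CARD('n) \<ge> 3" and nd: "nondegenerate s P"
begin

lemma decomp:
  assumes W: "W \<in> dual_birkhoff s P"
  shows "W = (\<Sum>j\<in>UNIV. (det2 (W$j) (ed s P j) / (Dd s P j * Dd s P (s j))) *\<^sub>R Vf s j P)"
proof -
  have "W $ k = (\<Sum>j\<in>UNIV. (det2 (W$j) (ed s P j) / (Dd s P j * Dd s P (s j))) *\<^sub>R Vf s j P) $ k" for k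
  proof -
  let ?i = "inv s k"
  let ?a = "ed s P ?i" and ?b = "ed s P k" and ?c = "ed s P (s k)" and ?a' = "ed s P (inv s ?i)"
  have sk: "s ?i = k" using cs_inv1[OF cs] .
  have D1: "Dd s P k = det2 ?a ?b" by (simp add: Dd_def)
  have D2: "Dd s P (s k) = det2 ?b ?c" by (simp add: Dd_def cs_inv2[OF cs])
  have D3: "Dd s P ?i = det2 ?a' ?a" by (simp add: Dd_def)
  have nz: "det2 ?a ?b \<noteq> 0" "det2 ?b ?c \<noteq> 0" "det2 ?a' ?a \<noteq> 0"
    using nondeg_Dd[OF cs nd] D1 D2 D3 by metis+
  have "det2 (W$?i + W$(s ?i)) (P$(s ?i) - P$?i) = 0" using W unfolding dual_birkhoff_def by blast
  then have con: "det2 (W$?i + W$k) ?a = 0" by (simp add: ed_def sk)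
  show ?thesis
    unfolding Vf_comb[OF cs n3] sk D1 D2 D3
    using decomp2[OF nz con] by simp
  qed
  then show ?thesis by (simp add: vec_eq_iff)
qed

lemma indep_fam:
  assumes "(\<Sum>j\<in>UNIV. c j *\<^sub>R Vf s j P) = 0"
  shows "c k = 0"
proof -
  have "(c k * Dd s P (s k)) *\<^sub>R ed s P (inv s k) + (c (inv s k) * Dd s P (inv s k)) *\<^sub>R ed s P k = 0"
    using Vf_comb[OF cs n3, of c P k] unfolding assms by simp
  then have "c k * Dd s P (s k) = 0"
    using indep2 nondeg_Dd[OF cs nd, of k] unfolding Dd_def by blast
  then show ?thesis using nondeg_Dd[OF cs nd, of "s k"] by simp
qed

lemma db_subspace: "subspace (dual_birkhoff s P)"
proof -
  have "dual_birkhoff s P = (\<Inter>k. {W. phi s P W k = 0})" by (auto simp: db_phi)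
  then show ?thesis using linear_subspace_kernel[OF phi_linear] by (auto intro!: subspace_Inter)
qed

lemma db_span: "dual_birkhoff s P = span (range (\<lambda>j. Vf s j P))"
proof
  show "span (range (\<lambda>j. Vf s j P)) \<subseteq> dual_birkhoff s P"
    by (rule span_minimal) (use Vf_F[OF cs n3] db_subspace in auto)
  show "dual_birkhoff s P \<subseteq> span (range (\<lambda>j. Vf s j P))"
  proof
    fix W assume W: "W \<in> dual_birkhoff s P"
    show "W \<in> span (range (\<lambda>j. Vf s j P))"
      by (subst decomp[OF W]) (intro span_sum span_scale span_base, auto)
  qed
qed

lemma V_inj: "inj (\<lambda>j. Vf s j P)"
proof (rule injI)
  fix j m assume e: "Vf s j P = Vf s m P"
  show "j = m"
  proof (rule ccontr)
    assume jm: "j \<noteq> m"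
    let ?c = "\<lambda>i. (if i = j then 1 else 0) - (if i = m then 1 else (0::real))"
    have "(\<Sum>i\<in>UNIV. ?c i *\<^sub>R Vf s i P) = (\<Sum>i\<in>UNIV. (if i = j then Vf s j P else 0) - (if i = m then Vf s m P else 0))"
      by (intro sum.cong) auto
    also have "\<dots> = 0" using e by (simp add: sum_subtractf)
    finally have "?c j = 0" by (rule indep_fam)
    with jm show False by simp
  qed
qed

lemma db_dim: "dim (dual_birkhoff s P) = CARD('n)"
proof -
  have ind: "independent (range (\<lambda>j. Vf s j P))"
  proof (rule independent_if_scalars_zero)
    show "finite (range (\<lambda>j. Vf s j P))" by simp
    fix f x assume h: "(\<Sum>x\<in>range (\<lambda>j. Vf s j P). f x *\<^sub>R x) = 0" "x \<in> range (\<lambda>j. Vf s j P)"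
    then obtain k where k: "x = Vf s k P" by blast
    have "(\<Sum>j\<in>UNIV. f (Vf s j P) *\<^sub>R Vf s j P) = 0"
      using h(1) sum.reindex[OF V_inj, of "\<lambda>x. f x *\<^sub>R x"] by simp
    then show "f x = 0" using indep_fam[of "\<lambda>j. f (Vf s j P)" k] k by simp
  qed
  have "dim (dual_birkhoff s P) = card (range (\<lambda>j. Vf s j P))"
    using db_span dim_span_eq_card_independent[OF ind] by simp
  also have "\<dots> = CARD('n)" using card_image[OF V_inj] by simp
  finally show ?thesis .
qed


definition qq :: "'n \<Rightarrow> real" where
  "qq j = Dd s P j * Dd s P (s (s j)) * det2 (ed s P (s j)) (ed s P j)"

lemma qq_nz: "qq j \<noteq> 0"
proof -
  have "Dd s P (s j) = det2 (ed s P j) (ed s P (s j))" by (simp add: Dd_def cs_inv2[OF cs])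
  then have "det2 (ed s P (s j)) (ed s P j) \<noteq> 0" using nondeg_Dd[OF cs nd, of "s j"] det2_swap by (metis neg_0_equal_iff_equal)
  then show ?thesis unfolding qq_def using nondeg_Dd[OF cs nd] by simp
qed

lemma psi_eq: "det2 (Vf s j P $ k) (Vf s (s j) P $ k) = (if k = s j then qq j else 0)"
proof -
  have n1: "s j \<noteq> j" and n2: "s (s j) \<noteq> j" using cs_ne1[OF cs n3] cs_ne2[OF cs n3] by auto
  have z1: "det2 0 v = 0" "det2 v 0 = 0" for v by (simp_all add: det2_def)
  show ?thesis
  proof (cases "k = s j")
    case True
    then show ?thesis using n1 by (simp add: Vf_at[OF cs] cs_inv2[OF cs] det2_scales qq_def)
  next
    case False
    then show ?thesis using n1 n2 z1 by (cases "k = j") (auto simp: Vf_at[OF cs])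
  qed
qed

lemma bracket_G:
  "phi s P (lie_bracket (Vf s j) (Vf s (s j)) P) k
     = 2 * qq j * ((if k = j then 1 else 0) - (if k = s j then 1 else 0))"
proof -
  have "phi s P (lie_bracket (Vf s j) (Vf s (s j)) P) k
     = 2 * (det2 (Vf s j P $ s k) (Vf s (s j) P $ s k) - det2 (Vf s j P $ k) (Vf s (s j) P $ k))"
    unfolding phi_def by (rule bracket_phi[OF open_UNIV UNIV_I Vf_Ffield[OF cs n3] Vf_Ffield[OF cs n3]])
  also have "\<dots> = 2 * ((if s k = s j then qq j else 0) - (if k = s j then qq j else 0))"
    unfolding psi_eq ..
  also have "\<dots> = 2 * qq j * ((if k = j then 1 else 0) - (if k = s j then 1 else 0))"
    using cs_bij[OF cs] by (auto simp: bij_def inj_eq)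
  finally show ?thesis .
qed

end

lemma dA_phi_sum:
  fixes s :: "'n::finite \<Rightarrow> 'n"
  assumes "cyclic_succ s"
  shows "dA s P W = (\<Sum>k\<in>UNIV. phi s P W k)"
  using dA_phi[OF assms] unfolding phi_def by simp

lemma rot_inner: "det2 w q = w \<bullet> (vector [q$2, - q$1] :: real^2)"
  by (simp add: det2_def inner_vec_def sum_2)

lemma dA_grad:
  fixes s :: "'n::finite \<Rightarrow> 'n"
  assumes cs: "cyclic_succ s"
  shows "dA s P W = W \<bullet> (\<chi> i. (vector [(P$(s i) - P$(inv s i))$2, - (P$(s i) - P$(inv s i))$1] :: real^2))"
proof -
  have "(\<Sum>i\<in>UNIV. det2 (P$i) (W$(s i))) = (\<Sum>i\<in>UNIV. det2 (P$(inv s (s i))) (W$(s i)))"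
    by (simp add: cs_inv2[OF cs])
  also have "\<dots> = (\<Sum>i\<in>UNIV. det2 (P$(inv s i)) (W$i))"
    by (rule cs_reindex[OF cs, of "\<lambda>i. det2 (P$(inv s i)) (W$i)"])
  finally have r: "(\<Sum>i\<in>UNIV. det2 (P$i) (W$(s i))) = (\<Sum>i\<in>UNIV. det2 (P$(inv s i)) (W$i))" .
  have "dA s P W = (\<Sum>i\<in>UNIV. det2 (W$i) (P$(s i))) + (\<Sum>i\<in>UNIV. det2 (P$(inv s i)) (W$i))"
    unfolding dA_def sum.distrib r ..
  also have "\<dots> = (\<Sum>i\<in>UNIV. det2 (W$i) (P$(s i) - P$(inv s i)))"
    by (simp add: sum.distrib[symmetric] det2_def algebra_simps)
  also have "\<dots> = W \<bullet> (\<chi> i. (vector [(P$(s i) - P$(inv s i))$2, - (P$(s i) - P$(inv s i))$1] :: real^2))"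
    unfolding rot_inner by (simp add: inner_vec_def)
  finally show ?thesis .
qed

theorem theorem2p5:
  fixes s :: "'n::finite \<Rightarrow> 'n" and c :: real and P :: "real^2^'n"
  assumes "CARD('n) \<ge> 3" and "cyclic_succ s" and "c \<noteq> 0" and "P \<in> Mset s c"
  shows "frechet_derivative (area s) (at P) \<noteq> (\<lambda>W. 0)
    \<and> span ({X P | X S. open S \<and> P \<in> S \<and> F_field s S X}
            \<union> {lie_bracket X Y P | X Y S. open S \<and> P \<in> S \<and> F_field s S X \<and> F_field s S Y})
        = tangent_M s P
    \<and> dim (dual_birkhoff s P) = CARD('n)
    \<and> dim (tangent_M s P) = 2 * CARD('n) - 1"
proof -
  note n3 = assms(1) and cs = assms(2)
  have nd: "nondegenerate s P" and ar: "area s P = c" using assms(4) by (auto simp: Mset_def)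
  have TM: "tangent_M s P = {W. dA s P W = 0}" by (simp add: tangent_M_def area_fd)
  have dAP: "dA s P P \<noteq> 0" using dA_self[of s P] ar assms(3) by simp
  have C1: "frechet_derivative (area s) (at P) \<noteq> (\<lambda>W. 0)"
    using dAP unfolding area_fd by metis
  define Vals where "Vals = {X P | X S. open S \<and> P \<in> S \<and> F_field s S X}"
  define Brs where "Brs = {lie_bracket X Y P | X Y S. open S \<and> P \<in> S \<and> F_field s S X \<and> F_field s S Y}"
  define T where "T = span (Vals \<union> Brs)"
  have sub: "T \<subseteq> tangent_M s P"
    unfolding T_def TM
  proof (rule span_minimal)
    show "subspace {W. dA s P W = 0}" by (rule linear_subspace_kernel[OF dA_linear])
    show "Vals \<union> Brs \<subseteq> {W. dA s P W = 0}"
    proof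
      fix x assume "x \<in> Vals \<union> Brs"
      then show "x \<in> {W. dA s P W = 0}"
      proof
        assume "x \<in> Vals"
        then obtain X S where x: "x = X P" "P \<in> S" "F_field s S X" unfolding Vals_def by blast
        then have "x \<in> dual_birkhoff s P" unfolding F_field_def by blast
        then show ?thesis by (simp add: dA_phi_sum[OF cs] db_phi)
      next
        assume "x \<in> Brs"
        then obtain X Y S where x: "x = lie_bracket X Y P" "open S" "P \<in> S" "F_field s S X" "F_field s S Y"
          unfolding Brs_def by blast
        let ?psi = "\<lambda>k. det2 (X P $ k) (Y P $ k)"
        have "phi s P x k = 2 * (?psi (s k) - ?psi k)" for k
          unfolding phi_def x(1) by (rule bracket_phi[OF x(2-5)])
        then have "dA s P x = (\<Sum>k\<in>UNIV. 2 * (?psi (s k) - ?psi k))" by (simp add: dA_phi_sum[OF cs])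
        also have "\<dots> = 2 * ((\<Sum>k\<in>UNIV. ?psi (s k)) - (\<Sum>k\<in>UNIV. ?psi k))"
          by (simp add: sum_distrib_left sum_subtractf)
        also have "\<dots> = 0" using cs_reindex[OF cs, of ?psi] by simp
        finally show ?thesis by simp
      qed
    qed
  qed
  have VT: "Vf s j P \<in> T" for j
    unfolding T_def Vals_def using Vf_Ffield[OF cs n3, of j] by (intro span_base) blast
  have DT: "dual_birkhoff s P \<subseteq> T"
    unfolding db_span[OF cs n3 nd] T_def
    by (rule span_minimal) (use VT[unfolded T_def] in auto)
  define G where "G j = (1 / (2 * qq s P j)) *\<^sub>R lie_bracket (Vf s j) (Vf s (s j)) P" for j
  have GT: "G j \<in> T" for j
    unfolding G_def T_def Brs_def using Vf_Ffield[OF cs n3, of j] Vf_Ffield[OF cs n3, of "s j"]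
    by (intro span_scale span_base) blast
  have Gphi: "phi s P (G j) k = (if k = j then 1 else 0) - (if k = s j then 1 else 0)" for j k
    unfolding G_def phi_scale bracket_G[OF cs n3 nd] using qq_nz[OF cs n3 nd, of j] by simp
  have chain: "\<exists>u\<in>T. \<forall>k. phi s P u k = (if k = i then 1 else 0) - (if k = (s^^m) i then 1 else 0)" for m i
  proof (induction m)
    case 0
    have "0 \<in> T" unfolding T_def by (rule span_zero)
    then show ?case by (intro bexI[of _ 0]) (auto simp: phi_zero)
  next
    case (Suc m)
    then obtain u where u: "u \<in> T" "\<forall>k. phi s P u k = (if k = i then 1 else 0) - (if k = (s^^m) i then 1 else 0)" by blast
    have "u + G ((s^^m) i) \<in> T" using u(1) GT unfolding T_def by (intro span_add) auto
    then show ?case using u(2) by (intro bexI[of _ "u + G ((s^^m) i)"]) (auto simp: phi_add Gphi)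
  qed
  fix k0 :: 'n
  have "\<forall>i. \<exists>u\<in>T. \<forall>k. phi s P u k = (if k = i then 1 else 0) - (if k = k0 then 1 else 0)"
  proof
    fix i
    obtain m where "(s^^m) i = k0" using cs_reach[OF cs] by blast
    then show "\<exists>u\<in>T. \<forall>k. phi s P u k = (if k = i then 1 else 0) - (if k = k0 then 1 else 0)" using chain[of i m] by blast
  qed
  then obtain U where U: "\<And>i. U i \<in> T" "\<And>i k. phi s P (U i) k = (if k = i then 1 else 0) - (if k = k0 then 1 else 0)"
    by metis
  have sup: "tangent_M s P \<subseteq> T"
  proof
    fix W assume "W \<in> tangent_M s P"
    then have W0: "(\<Sum>k\<in>UNIV. phi s P W k) = 0" unfolding TM by (simp add: dA_phi_sum[OF cs])
    define Uw where "Uw = (\<Sum>i\<in>UNIV. phi s P W i *\<^sub>R U i)"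
    have UwT: "Uw \<in> T" unfolding Uw_def using U(1) unfolding T_def by (intro span_sum span_scale) auto
    have "phi s P Uw k = phi s P W k" for k
    proof -
      have "phi s P Uw k = (\<Sum>i\<in>UNIV. phi s P W i * ((if k = i then 1 else 0) - (if k = k0 then 1 else 0)))"
        unfolding Uw_def phi_sum phi_scale U(2) ..
      also have "\<dots> = (\<Sum>i\<in>UNIV. (if i = k then phi s P W i else 0)) - (if k = k0 then 1 else 0) * (\<Sum>i\<in>UNIV. phi s P W i)"
      proof -
        have "phi s P W i * ((if k = i then 1 else 0) - (if k = k0 then 1 else 0))
           = (if i = k then phi s P W i else 0) - (if k = k0 then 1 else 0) * phi s P W i" for i
          by auto
        then show ?thesis by (simp only: sum_subtractf sum_distrib_left)
      qed
      also have "\<dots> = phi s P W k" using W0 by simp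
      finally show ?thesis .
    qed
    then have "W - Uw \<in> dual_birkhoff s P" by (simp add: db_phi phi_diff)
    then have "W - Uw \<in> T" using DT by blast
    then have "(W - Uw) + Uw \<in> T" using UwT unfolding T_def by (intro span_add)
    then show "W \<in> T" by simp
  qed
  have C2: "T = tangent_M s P" using sub sup by blast
  have C3: "dim (dual_birkhoff s P) = CARD('n)" by (rule db_dim[OF cs n3 nd])
  define g where "g = (\<chi> i. (vector [(P$(s i) - P$(inv s i))$2, - (P$(s i) - P$(inv s i))$1] :: real^2))"
  have "g \<noteq> 0" using dAP dA_grad[OF cs, of P P] unfolding g_def[symmetric] by auto
  have "tangent_M s P = {W. g \<bullet> W = 0}" unfolding TM using dA_grad[OF cs] by (simp add: g_def inner_commute)
  then have C4: "dim (tangent_M s P) = 2 * CARD('n) - 1"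
    using dim_hyperplane[OF \<open>g \<noteq> 0\<close>] by simp
  show ?thesis using C1 C2 C3 C4 unfolding T_def Vals_def Brs_def by blast
qed

end
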